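(* Let $\diamond$ be the operation on $\mathcal A$-valued moulds defined in the context. Then: (i) $\diamond$ is associative; (ii) if $N$ is symmetrel, then $M\diamond N=M\circ N$ for every mould $M$; (iii) if $M$ and $N$ are both symmetrel, then $M\circ N$ is symmetrel.
   Context: Let $\bm k$ be a field, $\Omega$ a set with a commutative semigroup law written additively ($[a+b]$ the sum in $\Omega$), $\Omega^*$ the free monoid of words on $\Omega$ with empty word $\mathbf 1$, $\|\bm\omega\|=[\omega_1+\cdots+\omega_n]\in\Omega$ the weight of a nonempty word $\bm\omega=\omega_1\cdots\omega_n$, and $\mathcal H^\Omega$ the $\bm k$-vector space with basis $\Omega^*$. The quasi-shuffle product $\star$ on $\mathcal H^\Omega$ is defined bilinearly by $\mathbf 1\star\bm\omega=\bm\omega\star\mathbf 1=\bm\omega$ and $a\bm u\star b\bm v=a(\bm u\star b\bm v)+b(a\bm u\star\bm v)+[a+b](\bm u\star\bm v)$ for letters $a,b$ and words $\bm u,\bm v$. Let $\mathcal A$ be a commutative unital $\bm k$-algebra; a mould is a linear map $M:\mathcal H^\Omega\to\mathcal A$, $M^{\bm\omega}:=M(\bm\omega)$. A mould $N$ is symmetrel if $N^{\mathbf 1}=1$ and $N^{\bm\omega'\star\bm\omega''}=N^{\bm\omega'}N^{\bm\omega''}$ for all words $\bm\omega',\bm\omega''$. Mould composition: $(M\circ N)^{\mathbf 1}=M^{\mathbf 1}$ and for $\bm\omega\neq\mathbf 1$, $(M\circ N)^{\bm\omega}=\sum_{s\ge1}\sum_{\bm\omega=\bm\omega^1\cdots\bm\omega^s}M^{\|\bm\omega^1\|\cdots\|\bm\omega^s\|}N^{\bm\omega^1}\cdots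 N^{\bm\omega^s}$, the inner sum over all ways of writing $\bm\omega$ as a concatenation of $s$ nonempty words, $\|\bm\omega^1\|\cdots\|\bm\omega^s\|$ being the word formed by their weights. The diamond composition is $(M\diamond N)^{\mathbf 1}=M^{\mathbf 1}N^{\mathbf 1}$ and for $\bm\omega\neq\mathbf 1$, $(M\diamond N)^{\bm\omega}=\sum_{s\ge1}\sum_{\bm\omega=\bm\omega^1\cdots\bm\omega^s}M^{\|\bm\omega^1\|\cdots\|\bm\omega^s\|}N^{\bm\omega^1\star\cdots\star\bm\omega^s}$ (same index set). *)

theory Defs
  imports Main "HOL-Library.Multiset"
begin

text \<open>The space H^Omega has basis the words; a quasi-shuffle product of two words is a
  linear combination of words with natural-number coefficients, represented as a
  multiset of words. A mould (linear map H^Omega to A) is determined by its values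
  on words, so it is represented as a function from words to A.\<close>

fun qsh :: "'w::ab_semigroup_add list \<Rightarrow> 'w list \<Rightarrow> 'w list multiset" where
  "qsh [] v = {#v#}"
| "qsh u [] = {#u#}"
| "qsh (a # u) (b # v) =
     image_mset ((#) a) (qsh u (b # v)) + image_mset ((#) b) (qsh (a # u) v)
   + image_mset ((#) (a + b)) (qsh u v)"

definition ev :: "('w list \<Rightarrow> 'a::comm_ring_1) \<Rightarrow> 'w list multiset \<Rightarrow> 'a" where
  "ev M X = sum_mset (image_mset M X)"

fun qshs :: "'w::ab_semigroup_add list list \<Rightarrow> 'w list multiset" where
  "qshs [] = {#[]#}"
| "qshs (w # ws) = sum_mset (image_mset (qsh w) (qshs ws))"

definition weight :: "'w::ab_semigroup_add list \<Rightarrow> 'w" where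
  "weight w = foldl (+) (hd w) (tl w)"

definition splits :: "'w list \<Rightarrow> 'w list list set" where
  "splits w = {ws. concat ws = w \<and> [] \<notin> set ws}"

definition symmetrel :: "('w::ab_semigroup_add list \<Rightarrow> 'a::comm_ring_1) \<Rightarrow> bool" where
  "symmetrel N \<longleftrightarrow> N [] = 1 \<and> (\<forall>u v. ev N (qsh u v) = N u * N v)"

definition mcomp :: "('w::ab_semigroup_add list \<Rightarrow> 'a::comm_ring_1) \<Rightarrow> ('w list \<Rightarrow> 'a) \<Rightarrow> 'w list \<Rightarrow> 'a" where
  "mcomp M N w = (if w = [] then M []
     else (\<Sum>ws\<in>splits w. M (map weight ws) * prod_list (map N ws)))"

definition diamond :: "('w::ab_semigroup_add list \<Rightarrow> 'a::comm_ring_1) \<Rightarrow> ('w list \<Rightarrow> 'a) \<Rightarrow> 'w list \<Rightarrow> 'a" where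
  "diamond M N w = (if w = [] then M [] * N []
     else (\<Sum>ws\<in>splits w. M (map weight ws) * ev N (qshs ws)))"

end

theory Submission
  imports Defs
begin


definition mb :: "'a multiset \<Rightarrow> ('a \<Rightarrow> 'b multiset) \<Rightarrow> 'b multiset" where
  "mb X f = sum_mset (image_mset f X)"

lemma mb_empty[simp]: "mb {#} f = {#}" by (simp add: mb_def)
lemma mb_add_mset[simp]: "mb (add_mset x X) f = f x + mb X f" by (simp add: mb_def)
lemma mb_single: "mb {#x#} f = f x" by simp
lemma mb_add[simp]: "mb (X + Y) f = mb X f + mb Y f" by (simp add: mb_def)
lemma mb_plus_fun[simp]: "mb X (\<lambda>x. f x + g x) = mb X f + mb X g"
  by (induction X) (auto simp: add_ac)
lemma mb_zero_fun[simp]: "mb X (\<lambda>x. {#}) = {#}" by (induction X) auto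
lemma mb_assoc[simp]: "mb (mb X f) g = mb X (\<lambda>x. mb (f x) g)" by (induction X) auto
lemma mb_image[simp]: "mb (image_mset h X) f = mb X (\<lambda>x. f (h x))" by (induction X) auto
lemma image_mb[simp]: "image_mset h (mb X f) = mb X (\<lambda>x. image_mset h (f x))" by (induction X) auto
lemma mb_swap: "mb X (\<lambda>x. mb Y (f x)) = mb Y (\<lambda>y. mb X (\<lambda>x. f x y))"
  by (induction X) auto
lemma mb_cong: "(\<And>x. x \<in># X \<Longrightarrow> f x = g x) \<Longrightarrow> mb X f = mb X g"
  by (induction X) auto
lemma mb_singleton_fun[simp]: "mb X (\<lambda>x. {#x#}) = X" by (induction X) auto
lemma mb_sum_left[simp]: "mb (\<Sum>i\<in>I. F i) f = (\<Sum>i\<in>I. mb (F i) f)"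
  by (induction I rule: infinite_finite_induct) auto
lemma mb_sum_right: "mb X (\<lambda>x. \<Sum>i\<in>I. F i x) = (\<Sum>i\<in>I. mb X (F i))"
  by (induction I rule: infinite_finite_induct) auto

definition es :: "('b \<Rightarrow> 'a::comm_ring_1) \<Rightarrow> 'b multiset \<Rightarrow> 'a" where
  "es F X = sum_mset (image_mset F X)"
lemma es_empty[simp]: "es F {#} = 0" by (simp add: es_def)
lemma es_add_mset[simp]: "es F (add_mset x X) = F x + es F X" by (simp add: es_def)
lemma es_add[simp]: "es F (X + Y) = es F X + es F Y" by (simp add: es_def)
lemma es_mb[simp]: "es F (mb X f) = es (\<lambda>x. es F (f x)) X" by (induction X) auto
lemma es_image[simp]: "es F (image_mset h X) = es (\<lambda>x. F (h x)) X" by (induction X) auto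
lemma es_cong: "(\<And>x. x \<in># X \<Longrightarrow> f x = g x) \<Longrightarrow> es f X = es g X"
  by (induction X) auto
lemma ev_es: "ev N X = es N X" by (simp add: ev_def es_def)



lemma qsh_Nil2[simp]: "qsh u [] = {#u#}" by (cases u) auto

lemma qsh_comm: "qsh u v = qsh v u"
  by (induction u v rule: qsh.induct) (auto simp: add_ac add.commute)

lemma weight_single[simp]: "weight [a] = a" by (simp add: weight_def)
lemma foldl_plus: "foldl (+) (a + b) w = a + foldl (+) b (w::'w::ab_semigroup_add list)"
  by (induction w arbitrary: b) (auto simp: add.assoc)
lemma weight_Cons2[simp]: "weight (a # b # w) = a + weight (b # w)"
  by (simp add: weight_def foldl_plus)
lemma weight_Cons: "w \<noteq> [] \<Longrightarrow> weight (a # w) = a + weight w"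
  by (cases w) auto
lemma weight_append: "u \<noteq> [] \<Longrightarrow> v \<noteq> [] \<Longrightarrow> weight (u @ v) = weight u + weight v"
  by (induction u rule: induct_list012) (auto simp: weight_Cons add.assoc)

lemma qsh_nonempty: "x \<in># qsh u v \<Longrightarrow> u \<noteq> [] \<or> v \<noteq> [] \<Longrightarrow> x \<noteq> []"
  by (induction u v arbitrary: x rule: qsh.induct) auto

lemma qsh_weight: "x \<in># qsh u v \<Longrightarrow> u \<noteq> [] \<Longrightarrow> v \<noteq> [] \<Longrightarrow> weight x = weight u + weight v"
proof (induction u v arbitrary: x rule: qsh.induct)
  case (3 a u b v)
  from 3(4) consider (A) y where "x = a # y" "y \<in># qsh u (b # v)"
    | (B) y where "x = b # y" "y \<in># qsh (a # u) v"
    | (C) y where "x = (a + b) # y" "y \<in># qsh u v" by auto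
  then show ?case
  proof cases
    case A
    have "y \<noteq> []" using A qsh_nonempty by blast
    show ?thesis
    proof (cases "u = []")
      case True then show ?thesis using A by (simp add: weight_Cons)
    next
      case False then show ?thesis using A 3(1) \<open>y \<noteq> []\<close> by (simp add: weight_Cons add.assoc)
    qed
  next
    case B
    have "y \<noteq> []" using B qsh_nonempty by blast
    show ?thesis
    proof (cases "v = []")
      case True then show ?thesis using B by (simp add: weight_Cons add_ac)
    next
      case False then show ?thesis using B 3(2) \<open>y \<noteq> []\<close> by (simp add: weight_Cons add_ac)
    qed
  next
    case C
    show ?thesis
    proof (cases "u = []"; cases "v = []")
      assume "u = []" "v = []" then show ?thesis using C by simp
    next
      assume "u = []" "v \<noteq> []" then show ?thesis using C by (simp add: weight_Cons add_ac)
    next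
      assume "u \<noteq> []" "v = []" then show ?thesis using C by (simp add: weight_Cons add_ac)
    next
      assume "u \<noteq> []" "v \<noteq> []"
      moreover have "y \<noteq> []" using C qsh_nonempty calculation by blast
      ultimately show ?thesis using C 3(3) by (simp add: weight_Cons add_ac)
    qed
  qed
qed auto



definition qM :: "'w::ab_semigroup_add list multiset \<Rightarrow> 'w list multiset \<Rightarrow> 'w list multiset" where
  "qM X Y = mb X (\<lambda>x. mb Y (qsh x))"

definition pre :: "'w \<Rightarrow> 'w list multiset \<Rightarrow> 'w list multiset" where
  "pre a X = image_mset ((#) a) X"

lemma qM_single[simp]: "qM {#x#} {#y#} = qsh x y" by (simp add: qM_def)
lemma qM_empty1[simp]: "qM {#} Y = {#}" by (simp add: qM_def)
lemma qM_empty2[simp]: "qM X {#} = {#}" by (simp add: qM_def)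
lemma qM_add1[simp]: "qM (X + Y) Z = qM X Z + qM Y Z" by (simp add: qM_def)
lemma qM_add2[simp]: "qM X (Y + Z) = qM X Y + qM X Z" by (simp add: qM_def)
lemma pre_add[simp]: "pre a (X + Y) = pre a X + pre a Y" by (simp add: pre_def)
lemma pre_empty[simp]: "pre a {#} = {#}" by (simp add: pre_def)
lemma qM_comm: "qM X Y = qM Y X"
  unfolding qM_def by (subst mb_swap) (simp add: qsh_comm)
lemma qM_pre_pre: "qM (pre a X) (pre b Y) = pre a (qM X (pre b Y)) + pre b (qM (pre a X) Y) + pre (a+b) (qM X Y)"
  by (simp add: qM_def pre_def)

lemma qsh_Nil1_fun: "qsh [] = (\<lambda>v. {#v#})" by auto
lemma qM_Nil1[simp]: "qM {#[]#} Y = Y" by (simp add: qM_def qsh_Nil1_fun)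
lemma qM_Nil2[simp]: "qM X {#[]#} = X" by (simp add: qM_def)

lemma L7: "qM (qM (pre a A) (pre b B)) (pre c C) =
   pre a (qM (qM A (pre b B)) (pre c C)) + pre b (qM (qM (pre a A) B) (pre c C)) + pre c (qM (qM (pre a A) (pre b B)) C)
 + pre (a+b) (qM (qM A B) (pre c C)) + pre (a+c) (qM (qM A (pre b B)) C) + pre (b+c) (qM (qM (pre a A) B) C)
 + pre (a+b+c) (qM (qM A B) C)"
  by (simp only: qM_pre_pre qM_add1) (simp add: add_ac)

lemma R7: "qM (pre a A) (qM (pre b B) (pre c C)) =
   pre a (qM A (qM (pre b B) (pre c C))) + pre b (qM (pre a A) (qM B (pre c C))) + pre c (qM (pre a A) (qM (pre b B) C))
 + pre (a+b) (qM A (qM B (pre c C))) + pre (a+c) (qM A (qM (pre b B) C)) + pre (b+c) (qM (pre a A) (qM B C))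
 + pre (a+b+c) (qM A (qM B C))"
  by (simp only: qM_pre_pre qM_add2) (simp add: add_ac)

lemma pre_single[simp]: "pre a {#u#} = {#a # u#}" by (simp add: pre_def)

lemma qsh_assoc_words: "qM (qsh u v) {#w#} = qM {#u#} (qsh v w)"
proof (induction "length u + length v + length w" arbitrary: u v w rule: less_induct)
  case less
  show ?case
  proof (cases "u = [] \<or> v = [] \<or> w = []")
    case True then show ?thesis by (auto simp: qsh_Nil1_fun)
  next
    case False
    then obtain a u' b v' c w' where e: "u = a # u'" "v = b # v'" "w = c # w'"
      by (meson neq_Nil_conv)
    have "qM (qsh u v) {#w#} = qM (qM (pre a {#u'#}) (pre b {#v'#})) (pre c {#w'#})"
      using e by (simp del: qsh.simps)
    also have "\<dots> = qM (pre a {#u'#}) (qM (pre b {#v'#}) (pre c {#w'#}))"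
      unfolding L7 R7 using less e by (simp del: qsh.simps)
    also have "\<dots> = qM {#u#} (qsh v w)" using e by (simp del: qsh.simps)
    finally show ?thesis .
  qed
qed

lemma qM_assoc: "qM (qM X Y) Z = qM X (qM Y Z)"
proof -
  have "qM (qM X Y) Z = mb X (\<lambda>x. mb Y (\<lambda>y. mb (qsh x y) (\<lambda>x'. mb Z (qsh x'))))"
    by (simp add: qM_def)
  also have "\<dots> = mb X (\<lambda>x. mb Y (\<lambda>y. mb Z (\<lambda>z. qM (qsh x y) {#z#})))"
    by (simp add: qM_def mb_swap[of "qsh _ _"])
  also have "\<dots> = mb X (\<lambda>x. mb Y (\<lambda>y. mb Z (\<lambda>z. qM {#x#} (qsh y z))))"
    by (simp only: qsh_assoc_words)
  also have "\<dots> = qM X (qM Y Z)"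
    by (simp add: qM_def)
  finally show ?thesis .
qed



lemma mb_single_fun[simp]: "mb X (\<lambda>x. {#f x#}) = image_mset f X" by (induction X) auto
lemma case_prod_apfst[simp]: "(case apfst f x of (a, b) \<Rightarrow> G a b) = (case x of (a, b) \<Rightarrow> G (f a) b)"
  by (cases x) auto

lemma mb_add_mset_fun[simp]: "mb X (\<lambda>x. add_mset (f x) (g x)) = image_mset f X + mb X g"
  by (induction X) auto
lemma image_case_prod[simp]: "image_mset h (case x of (a, b) \<Rightarrow> F a b) = (case x of (a, b) \<Rightarrow> image_mset h (F a b))"
  by (cases x) auto
lemma image_image_mset[simp]: "image_mset f (image_mset g X) = image_mset (\<lambda>x. f (g x)) X"
  by (induction X) auto

fun dec :: "'w list \<Rightarrow> ('w list \<times> 'w list) multiset" where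
  "dec [] = {#([],[])#}"
| "dec (a # z) = {#([], a # z)#} + image_mset (apfst ((#) a)) (dec z)"

fun decp :: "'w list \<Rightarrow> ('w list \<times> 'w list) multiset" where
  "decp [] = {#}"
| "decp (a # z) = image_mset (apfst ((#) a)) (dec z)"

lemma dec_decp: "dec z = {#([], z)#} + decp z" by (cases z) auto

definition tp :: "'a multiset \<Rightarrow> 'b multiset \<Rightarrow> ('a \<times> 'b) multiset" where
  "tp X Y = mb X (\<lambda>x. image_mset (Pair x) Y)"

lemma tp_single[simp]: "tp {#x#} {#y#} = {#(x, y)#}" by (simp add: tp_def)
lemma mb_prod_single[simp]: "mb X (\<lambda>(a, b). {#(a, b)#}) = X" by (induction X) auto

lemma dec_qsh: "mb (qsh x y) dec = mb (dec x) (\<lambda>(x1, x2). mb (dec y) (\<lambda>(y1, y2). tp (qsh x1 y1) (qsh x2 y2)))"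
proof (induction x y rule: qsh.induct)
  case (1 v)
  then show ?case by (simp add: qsh_Nil1_fun)
next
  case (2 a u)
  then show ?case by simp
next
  case (3 a u b v)
  have I1: "image_mset (apfst ((#) a)) (mb (qsh u (b # v)) dec) = image_mset (apfst ((#) a))
     (mb (dec u) (\<lambda>(x1, x2). mb (dec (b#v)) (\<lambda>(y1, y2). tp (qsh x1 y1) (qsh x2 y2))))"
    using 3(1) by simp
  have I2: "image_mset (apfst ((#) b)) (mb (qsh (a#u) v) dec) = image_mset (apfst ((#) b))
     (mb (dec (a#u)) (\<lambda>(x1, x2). mb (dec v) (\<lambda>(y1, y2). tp (qsh x1 y1) (qsh x2 y2))))"
    using 3(2) by simp
  have I3: "image_mset (apfst ((#) (a+b))) (mb (qsh u v) dec) = image_mset (apfst ((#) (a+b)))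
     (mb (dec u) (\<lambda>(x1, x2). mb (dec v) (\<lambda>(y1, y2). tp (qsh x1 y1) (qsh x2 y2))))"
    using 3(3) by simp
  show ?case
    using I1 I2 I3 by (simp add: tp_def o_def pre_def split_def add_ac)
qed



lemma mb_decp_sum: "mb (decp v) (\<lambda>(p, r). G p r) = (\<Sum>i\<in>{1..length v}. G (take i v) (drop i v))"
proof (induction v arbitrary: G)
  case Nil then show ?case by simp
next
  case (Cons a z)
  have "mb (decp (a # z)) (\<lambda>(p, r). G p r) = G [a] z + mb (decp z) (\<lambda>(p, r). G (a # p) r)"
    by (simp add: dec_decp split_def)
  also have "\<dots> = G [a] z + (\<Sum>i\<in>{1..length z}. G (a # take i z) (drop i z))"
    using Cons[of "\<lambda>p r. G (a # p) r"] by simp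
  also have "\<dots> = (\<Sum>i\<in>{1..length (a # z)}. G (take i (a # z)) (drop i (a # z)))"
  proof -
    have s: "{1..length (a # z)} = insert 1 (Suc ` {1..length z})" by (auto simp: image_iff)
    have r: "(\<Sum>i\<in>Suc ` {1..length z}. G (take i (a#z)) (drop i (a#z))) = (\<Sum>i\<in>{1..length z}. G (a # take i z) (drop i z))"
      by (subst sum.reindex) auto
    show ?thesis unfolding s by (subst sum.insert) (use r in auto)
  qed
  finally show ?case .
qed

lemma splits_Nil[simp]: "splits [] = {[]}"
  by (auto simp: splits_def) (metis list.set_intros(1) neq_Nil_conv)

lemma splits_rec: "v \<noteq> [] \<Longrightarrow> splits v = (\<Union>i\<in>{1..length v}. (\<lambda>ws. take i v # ws) ` splits (drop i v))"
proof (intro equalityI subsetI)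
  fix ws assume v: "v \<noteq> []" and ws: "ws \<in> splits v"
  then obtain p ws' where e: "ws = p # ws'" unfolding splits_def by (cases ws) auto
  have p: "p \<noteq> []" and c: "v = p @ concat ws'" and ws': "[] \<notin> set ws'" using ws e by (auto simp: splits_def)
  let ?i = "length p"
  have "?i \<in> {1..length v}" using p c by (cases p) auto
  moreover have "take ?i v = p" "drop ?i v = concat ws'" using c by auto
  ultimately show "ws \<in> (\<Union>i\<in>{1..length v}. (\<lambda>ws. take i v # ws) ` splits (drop i v))"
    using e ws' by (auto simp: splits_def intro!: bexI[of _ ?i])
next
  fix ws assume v: "v \<noteq> []" and "ws \<in> (\<Union>i\<in>{1..length v}. (\<lambda>ws. take i v # ws) ` splits (drop i v))"
  then obtain i ws' where i: "i \<in> {1..length v}" and e: "ws = take i v # ws'" and ws': "ws' \<in> splits (drop i v)" by auto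
  have "take i v \<noteq> []" using i v by auto
  then show "ws \<in> splits v" using e ws' by (auto simp: splits_def)
qed

lemma finite_splits: "finite (splits v)"
proof (induction "length v" arbitrary: v rule: less_induct)
  case less
  show ?case
  proof (cases "v = []")
    case True then show ?thesis by simp
  next
    case False
    have "finite (splits (drop i v))" if "i \<in> {1..length v}" for i
      using that less by auto
    then show ?thesis using False by (simp add: splits_rec)
  qed
qed

definition Phi :: "'w::ab_semigroup_add list \<Rightarrow> ('w list \<times> 'w list) multiset" where
  "Phi v = (\<Sum>ws\<in>splits v. image_mset (Pair (map weight ws)) (qshs ws))"

definition St :: "'w::ab_semigroup_add list \<Rightarrow> ('w list \<times> 'w list) multiset \<Rightarrow> ('w list \<times> 'w list) multiset" where
  "St p Y = mb Y (\<lambda>(W, Q). image_mset (Pair (weight p # W)) (qsh p Q))"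

lemma Phi_Nil[simp]: "Phi [] = {#([], [])#}"
  by (simp add: Phi_def)

lemma Phi_rec: "v \<noteq> [] \<Longrightarrow> Phi v = mb (decp v) (\<lambda>(p, r). St p (Phi r))"
proof -
  assume v: "v \<noteq> []"
  let ?f = "\<lambda>ws. image_mset (Pair (map weight ws)) (qshs ws)"
  have "Phi v = (\<Sum>i\<in>{1..length v}. sum ?f ((\<lambda>ws. take i v # ws) ` splits (drop i v)))"
    unfolding Phi_def splits_rec[OF v]
  proof (rule sum.UNION_disjoint)
    show "finite {1..length v}" by simp
    show "\<forall>i\<in>{1..length v}. finite ((\<lambda>ws. take i v # ws) ` splits (drop i v))"
      by (simp add: finite_splits)
    show "\<forall>i\<in>{1..length v}. \<forall>j\<in>{1..length v}. i \<noteq> j \<longrightarrow>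
       (\<lambda>ws. take i v # ws) ` splits (drop i v) \<inter> (\<lambda>ws. take j v # ws) ` splits (drop j v) = {}"
      by auto (metis length_take min.absorb2)
  qed
  also have "\<dots> = (\<Sum>i\<in>{1..length v}. St (take i v) (Phi (drop i v)))"
  proof (rule sum.cong)
    fix i assume "i \<in> {1..length v}"
    have "sum ?f ((\<lambda>ws. take i v # ws) ` splits (drop i v)) = (\<Sum>ws\<in>splits (drop i v). ?f (take i v # ws))"
      by (subst sum.reindex) (auto simp: inj_on_def)
    also have "\<dots> = St (take i v) (Phi (drop i v))"
      by (simp add: St_def Phi_def mb_def[symmetric])
    finally show "sum ?f ((\<lambda>ws. take i v # ws) ` splits (drop i v)) = St (take i v) (Phi (drop i v))" .
  qed simp
  also have "\<dots> = mb (decp v) (\<lambda>(p, r). St p (Phi r))"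
    by (simp add: mb_decp_sum)
  finally show ?thesis .
qed



lemma qM_left_comm: "qM X (qM Y Z) = qM Y (qM X Z)"
  by (metis qM_assoc qM_comm)
lemmas qM_ac = qM_assoc qM_comm qM_left_comm

lemma tp_add1[simp]: "tp (X + Y) Z = tp X Z + tp Y Z" by (simp add: tp_def)
lemma tp_add2[simp]: "tp X (Y + Z) = tp X Y + tp X Z" by (simp add: tp_def)
lemma tp_empty1[simp]: "tp {#} Z = {#}" by (simp add: tp_def)
lemma tp_empty2[simp]: "tp X {#} = {#}" by (simp add: tp_def)
lemma tp_mb1: "tp (mb X f) Y = mb X (\<lambda>x. tp (f x) Y)" by (simp add: tp_def)
lemma tp_mb2: "tp X (mb Y f) = mb Y (\<lambda>y. tp X (f y))" by (simp add: tp_def mb_swap[of X])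
lemma mb_tp: "mb (tp X Y) f = mb X (\<lambda>x. mb Y (\<lambda>y. f (x, y)))" by (simp add: tp_def)
lemma tp_alt: "tp X Y = mb X (\<lambda>x. mb Y (\<lambda>y. {#(x, y)#}))" by (simp add: tp_def)

definition qP :: "('w::ab_semigroup_add list \<times> 'w list) multiset \<Rightarrow> ('w list \<times> 'w list) multiset \<Rightarrow> ('w list \<times> 'w list) multiset" where
  "qP A B = mb A (\<lambda>(a, b). mb B (\<lambda>(c, d). tp (qsh a c) (qsh b d)))"

lemma qP_single[simp]: "qP {#(a, b)#} {#(c, d)#} = tp (qsh a c) (qsh b d)" by (simp add: qP_def)
lemma qP_mb1: "qP (mb X f) B = mb X (\<lambda>x. qP (f x) B)" by (simp add: qP_def)
lemma qP_mb2: "qP A (mb X f) = mb X (\<lambda>x. qP A (f x))"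
  by (simp add: qP_def split_def mb_swap[of A])
lemma qP_add1[simp]: "qP (X + Y) B = qP X B + qP Y B" by (simp add: qP_def)
lemma qP_add2[simp]: "qP A (X + Y) = qP A X + qP A Y" by (simp add: qP_def split_def)
lemma qP_empty1[simp]: "qP {#} B = {#}" by (simp add: qP_def)
lemma qP_empty2[simp]: "qP A {#} = {#}" by (simp add: qP_def split_def)

lemma qP_tp: "qP (tp X1 Y1) (tp X2 Y2) = tp (qM X1 X2) (qM Y1 Y2)"
proof -
  have "qP (tp X1 Y1) (tp X2 Y2) = mb X1 (\<lambda>x1. mb Y1 (\<lambda>y1. mb X2 (\<lambda>x2. mb Y2 (\<lambda>y2. tp (qsh x1 x2) (qsh y1 y2)))))"
    by (simp add: qP_def mb_tp split_def)
  also have "\<dots> = mb X1 (\<lambda>x1. mb X2 (\<lambda>x2. mb Y1 (\<lambda>y1. mb Y2 (\<lambda>y2. tp (qsh x1 x2) (qsh y1 y2)))))"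
    by (simp add: mb_swap[of Y1])
  also have "\<dots> = tp (qM X1 X2) (qM Y1 Y2)"
    by (simp add: qM_def tp_mb1) (simp add: tp_mb2)
  finally show ?thesis .
qed

definition StM :: "'w::ab_semigroup_add \<Rightarrow> 'w list multiset \<Rightarrow> ('w list \<times> 'w list) multiset \<Rightarrow> ('w list \<times> 'w list) multiset" where
  "StM c S Y = mb Y (\<lambda>(W, Q). tp (pre c {#W#}) (qM S {#Q#}))"

lemma St_StM: "St p Y = StM (weight p) {#p#} Y"
  by (simp add: St_def StM_def tp_def)

lemma StM_mb: "StM c S (mb Y f) = mb Y (\<lambda>y. StM c S (f y))" by (simp add: StM_def)
lemma StM_add[simp]: "StM c S (X + Y) = StM c S X + StM c S Y" by (simp add: StM_def)
lemma StM_empty[simp]: "StM c S {#} = {#}" by (simp add: StM_def)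
lemma StM_tp: "StM c S (tp X Y) = tp (pre c X) (qM S Y)"
  by (simp add: StM_def mb_tp pre_def qM_def tp_def mb_swap[of Y])

lemma StM_single: "StM c S {#(W, Q)#} = tp (pre c {#W#}) (qM S {#Q#})"
  by (simp add: StM_def)

lemma K_single: "qP (StM c S {#(W1,Q1)#}) (StM d T {#(W2,Q2)#}) =
   StM c S (qP {#(W1,Q1)#} (StM d T {#(W2,Q2)#})) + StM d T (qP (StM c S {#(W1,Q1)#}) {#(W2,Q2)#})
 + StM (c+d) (qM S T) (qP {#(W1,Q1)#} {#(W2,Q2)#})"
proof -
  have e1: "{#(W1,Q1)#} = tp {#W1#} {#Q1#}" "{#(W2,Q2)#} = tp {#W2#} {#Q2#}" by simp_all
  show ?thesis unfolding e1
    by (simp del: qM_single pre_single tp_single qsh.simps add: StM_tp qP_tp qM_pre_pre qM_ac add_ac)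
qed



lemma K1: "qP (StM c S {#x#}) (StM d T B) = StM c S (qP {#x#} (StM d T B)) + StM d T (qP (StM c S {#x#}) B) + StM (c+d) (qM S T) (qP {#x#} B)"
proof (induction B)
  case empty then show ?case by simp
next
  case (add y B)
  obtain W1 Q1 where x: "x = (W1, Q1)" by force
  obtain W2 Q2 where y: "y = (W2, Q2)" by force
  have e: "add_mset y B = {#y#} + B" by simp
  show ?case unfolding e
    apply (simp only: StM_add qP_add2 qP_add1)
    apply (simp only: add.IH[unfolded x] K_single x y)
    apply (simp only: add_ac)
    done
qed

lemma K: "qP (StM c S A) (StM d T B) = StM c S (qP A (StM d T B)) + StM d T (qP (StM c S A) B) + StM (c+d) (qM S T) (qP A B)"
proof (induction A)
  case empty then show ?case by simp
next
  case (add x A)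
  have e: "add_mset x A = {#x#} + A" by simp
  show ?case unfolding e
    apply (simp only: StM_add qP_add2 qP_add1)
    apply (simp only: add.IH K1)
    apply (simp only: add_ac)
    done
qed



lemma StM_mb_S: "StM c (mb S f) Y = mb S (\<lambda>s. StM c (f s) Y)"
  by (simp add: StM_def qM_def tp_mb2 split_def mb_swap[of Y])

lemma StM_single_S: "mb S (\<lambda>s. StM c {#s#} Y) = StM c S Y"
  by (simp add: StM_mb_S[symmetric])

lemma St_mb: "St p (mb Y f) = mb Y (\<lambda>y. St p (f y))" by (simp add: St_StM StM_mb)

lemma qP_unit1[simp]: "qP {#([], [])#} B = B"
  by (simp add: qP_def qsh_Nil1_fun split_def)
lemma qP_unit2[simp]: "qP A {#([], [])#} = A"
  by (simp add: qP_def split_def)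

lemma decp_fst_ne: "(p, r) \<in># decp z \<Longrightarrow> p \<noteq> []"
  by (cases z) auto

lemma dec_fun: "dec = (\<lambda>z. {#([], z)#} + decp z)"
  by (rule ext) (simp add: dec_decp)

lemma D0: "mb (qsh x y) decp = mb (decp x) (\<lambda>(x1, x2). mb (dec y) (\<lambda>(y1, y2). tp (qsh x1 y1) (qsh x2 y2)))
   + mb (decp y) (\<lambda>(y1, y2). tp {#y1#} (qsh x y2))"
proof -
  have "image_mset (Pair []) (qsh x y) + mb (qsh x y) decp = mb (qsh x y) dec"
    by (simp add: dec_fun)
  also have "\<dots> = image_mset (Pair []) (qsh x y) + (mb (decp x) (\<lambda>(x1, x2). mb (dec y) (\<lambda>(y1, y2). tp (qsh x1 y1) (qsh x2 y2)))
   + mb (decp y) (\<lambda>(y1, y2). tp {#y1#} (qsh x y2)))"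
    unfolding dec_qsh
    by (simp only: dec_decp[of x] dec_decp[of y] mb_add mb_add_mset mb_empty) (simp add: tp_def qsh_Nil1_fun)
  finally show ?thesis by simp
qed



lemma Phi_ne_rec: "x \<noteq> [] \<Longrightarrow> Phi x = mb (decp x) (\<lambda>(x1, x2). StM (weight x1) {#x1#} (Phi x2))"
  by (simp add: Phi_rec St_StM)

lemma dec_mem: "(p, r) \<in># dec z \<Longrightarrow> p @ r = z"
  by (induction z arbitrary: p r) auto
lemma decp_mem: "(p, r) \<in># decp z \<Longrightarrow> p \<noteq> [] \<and> p @ r = z"
  by (cases z) (auto dest: dec_mem)

lemma Phi_mult: "mb (qsh x y) Phi = qP (Phi x) (Phi y)"
proof (induction "length x + length y" arbitrary: x y rule: less_induct)
  case less
  consider "x = []" | "y = []" | "x \<noteq> [] \<and> y \<noteq> []" by blast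
  then show ?case
  proof cases
    case 1 then show ?thesis by (simp add: qsh_Nil1_fun)
  next
    case 2 then show ?thesis by simp
  next
    case 3
    then have x: "x \<noteq> []" and y: "y \<noteq> []" by auto
    let ?dx = "decp x" and ?dy = "decp y"
    have "mb (qsh x y) Phi = mb (mb (qsh x y) decp) (\<lambda>(p, r). St p (Phi r))"
      unfolding mb_assoc
    proof (rule mb_cong)
      fix z assume "z \<in># qsh x y"
      then have "z \<noteq> []" using qsh_nonempty x by blast
      then show "Phi z = mb (decp z) (\<lambda>(p, r). St p (Phi r))" by (rule Phi_rec)
    qed
    also have "\<dots> = mb ?dx (\<lambda>(x1, x2). mb (dec y) (\<lambda>(y1, y2). mb (qsh x1 y1) (\<lambda>p. St p (mb (qsh x2 y2) Phi))))
       + mb ?dy (\<lambda>(y1, y2). St y1 (mb (qsh x y2) Phi))"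
      unfolding D0 by (simp add: mb_tp St_mb split_def)
    also have "\<dots> = mb ?dx (\<lambda>(x1, x2). mb (dec y) (\<lambda>(y1, y2). mb (qsh x1 y1) (\<lambda>p. St p (qP (Phi x2) (Phi y2)))))
       + mb ?dy (\<lambda>(y1, y2). St y1 (qP (Phi x) (Phi y2)))"
    proof -
      have a: "mb (qsh x2 y2) Phi = qP (Phi x2) (Phi y2)" if "(x1, x2) \<in># ?dx" "(y1, y2) \<in># dec y" for x1 x2 y1 y2
      proof -
        have "x1 \<noteq> []" "x1 @ x2 = x" "y1 @ y2 = y" using that decp_mem dec_mem by blast+
        then have "length x2 + length y2 < length x + length y" by (cases x1) auto
        then show ?thesis using less by blast
      qed
      have b: "mb (qsh x y2) Phi = qP (Phi x) (Phi y2)" if "(y1, y2) \<in># ?dy" for y1 y2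
      proof -
        have "y1 \<noteq> []" "y1 @ y2 = y" using that decp_mem by blast+
        then have "length x + length y2 < length x + length y" by (cases y1) auto
        then show ?thesis using less by blast
      qed
      show ?thesis
        by (intro arg_cong2[where f="(+)"] mb_cong) (auto simp: a b intro!: mb_cong)
    qed
    also have "\<dots> = mb ?dx (\<lambda>(x1, x2). StM (weight x1) {#x1#} (qP (Phi x2) (Phi y))
          + mb ?dy (\<lambda>(y1, y2). StM (weight x1 + weight y1) (qM {#x1#} {#y1#}) (qP (Phi x2) (Phi y2))))
       + mb ?dy (\<lambda>(y1, y2). StM (weight y1) {#y1#} (qP (Phi x) (Phi y2)))"
    proof -
      have c: "mb (qsh x1 y1) (\<lambda>p. StM (weight p) {#p#} Z) = StM (weight x1 + weight y1) (qsh x1 y1) Z"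
        if "x1 \<noteq> []" "y1 \<noteq> []" for x1 y1 Z
      proof -
        have "mb (qsh x1 y1) (\<lambda>p. StM (weight p) {#p#} Z) = mb (qsh x1 y1) (\<lambda>p. StM (weight x1 + weight y1) {#p#} Z)"
          by (rule mb_cong) (simp add: qsh_weight that)
        then show ?thesis by (simp add: StM_single_S)
      qed
      show ?thesis
        by (intro arg_cong2[where f="(+)"] mb_cong)
           (auto simp: dec_decp[of y] St_StM c dest!: decp_mem intro!: mb_cong)
    qed
    also have "\<dots> = qP (Phi x) (Phi y)"
    proof -
      have R1: "qP (Phi x) (Phi y) = mb ?dx (\<lambda>(x1, x2). mb ?dy (\<lambda>(y1, y2).
           qP (StM (weight x1) {#x1#} (Phi x2)) (StM (weight y1) {#y1#} (Phi y2))))"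
        by (simp add: Phi_ne_rec[OF x] Phi_ne_rec[OF y] qP_mb1 split_def, simp add: qP_mb2 split_def)
      have T1: "mb ?dx (\<lambda>(x1, x2). mb ?dy (\<lambda>(y1, y2).
           StM (weight x1) {#x1#} (qP (Phi x2) (StM (weight y1) {#y1#} (Phi y2)))))
         = mb ?dx (\<lambda>(x1, x2). StM (weight x1) {#x1#} (qP (Phi x2) (Phi y)))"
        by (simp add: Phi_ne_rec[OF y] qP_mb2 StM_mb split_def)
      have T2: "mb ?dx (\<lambda>(x1, x2). mb ?dy (\<lambda>(y1, y2).
           StM (weight y1) {#y1#} (qP (StM (weight x1) {#x1#} (Phi x2)) (Phi y2))))
         = mb ?dy (\<lambda>(y1, y2). StM (weight y1) {#y1#} (qP (Phi x) (Phi y2)))"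
        by (simp only: split_def, subst mb_swap, simp add: Phi_ne_rec[OF x] qP_mb1 StM_mb split_def)
      show ?thesis unfolding R1 K using T1 T2 by (simp add: split_def add_ac)
    qed
    finally show ?thesis .
  qed
qed



lemma dec_coassoc: "mb (dec v) (\<lambda>(p, r). mb (dec r) (\<lambda>(g, r'). H p g r')) = mb (dec v) (\<lambda>(g, r'). mb (dec g) (\<lambda>(p, g'). H p g' r'))"
proof (induction v arbitrary: H)
  case Nil then show ?case by simp
next
  case (Cons a z)
  have IH: "mb (dec z) (\<lambda>(p, r). mb (dec r) (\<lambda>(g, r'). H (a # p) g r')) = mb (dec z) (\<lambda>(g, r'). mb (dec g) (\<lambda>(p, g'). H (a # p) g' r'))"
    using Cons[of "\<lambda>p. H (a # p)"] .
  show ?case using IH by (simp add: split_def add_ac)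
qed

lemma decp_coassoc: "mb (decp v) (\<lambda>(p, r). mb (dec r) (\<lambda>(g, r'). H p g r')) = mb (decp v) (\<lambda>(g, r'). mb (decp g) (\<lambda>(p, g'). H p g' r'))"
proof -
  have "mb (dec v) (\<lambda>(g, r'). H [] g r') + mb (decp v) (\<lambda>(p, r). mb (dec r) (\<lambda>(g, r'). H p g r'))
      = mb (dec v) (\<lambda>(p, r). mb (dec r) (\<lambda>(g, r'). H p g r'))"
    by (simp add: dec_decp[of v] split_def)
  also have "\<dots> = mb (dec v) (\<lambda>(g, r'). mb (dec g) (\<lambda>(p, g'). H p g' r'))" by (rule dec_coassoc)
  also have "\<dots> = mb (dec v) (\<lambda>(g, r'). H [] g r') + mb (decp v) (\<lambda>(g, r'). mb (decp g) (\<lambda>(p, g'). H p g' r'))"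
    by (simp add: dec_decp[of v] dec_fun split_def add_ac del: dec.simps)
  finally show ?thesis by simp
qed



lemma mb_qsh_assoc: "mb (qsh p Q1) (\<lambda>Q'. mb (qsh Q' Q2) f) = mb (qsh Q1 Q2) (\<lambda>Q. mb (qsh p Q) f)"
proof -
  have "mb (qsh p Q1) (\<lambda>Q'. mb (qsh Q' Q2) f) = mb (qM (qsh p Q1) {#Q2#}) f" by (simp add: qM_def)
  also have "\<dots> = mb (qM {#p#} (qsh Q1 Q2)) f" by (simp only: qsh_assoc_words)
  finally show ?thesis by (simp add: qM_def)
qed

lemma PhiD: "mb (Phi v) (\<lambda>(W, Q). mb (dec W) (\<lambda>(W1, W2). F W1 W2 Q))
  = mb (dec v) (\<lambda>(g, r). mb (Phi g) (\<lambda>(W1, Q1). mb (Phi r) (\<lambda>(W2, Q2). mb (qsh Q1 Q2) (F W1 W2))))"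
proof (induction "length v" arbitrary: v F rule: less_induct)
  case less
  show ?case
  proof (cases "v = []")
    case True then show ?thesis by simp
  next
    case v: False
    have A: "mb (decp v) (\<lambda>(p, r). mb (Phi r) (\<lambda>(W, Q). mb (qsh p Q) (\<lambda>Q'. F [] (weight p # W) Q')))
       = mb (Phi v) (\<lambda>(W, Q). F [] W Q)"
      by (simp add: Phi_rec[OF v] St_def split_def)
    have B: "mb (decp v) (\<lambda>(p, r). mb (Phi r) (\<lambda>(W, Q). mb (qsh p Q) (\<lambda>Q'. mb (dec W) (\<lambda>(W1, W2). F (weight p # W1) W2 Q'))))
      = mb (decp v) (\<lambda>(p, r). mb (dec r) (\<lambda>(g', r'). mb (Phi g') (\<lambda>(W1, Q1). mb (Phi r') (\<lambda>(W2, Q2).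
           mb (qsh Q1 Q2) (\<lambda>Q. mb (qsh p Q) (F (weight p # W1) W2))))))"
    proof (rule mb_cong)
      fix pr assume pr: "pr \<in># decp v"
      obtain p r where e: "pr = (p, r)" by force
      have "p \<noteq> []" "p @ r = v" using pr decp_mem unfolding e by blast+
      then have len: "length r < length v" by (cases p) auto
      have "mb (Phi r) (\<lambda>(W, Q). mb (qsh p Q) (\<lambda>Q'. mb (dec W) (\<lambda>(W1, W2). F (weight p # W1) W2 Q')))
        = mb (Phi r) (\<lambda>(W, Q). mb (dec W) (\<lambda>(W1, W2). mb (qsh p Q) (F (weight p # W1) W2)))"
        by (rule mb_cong) (auto simp: split_def intro: mb_swap)
      also have "\<dots> = mb (dec r) (\<lambda>(g', r'). mb (Phi g') (\<lambda>(W1, Q1). mb (Phi r') (\<lambda>(W2, Q2).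
           mb (qsh Q1 Q2) (\<lambda>Q. mb (qsh p Q) (F (weight p # W1) W2)))))"
        using less(1)[OF len, of "\<lambda>W1 W2 Q. mb (qsh p Q) (F (weight p # W1) W2)"] .
      finally show "(\<lambda>(p, r). mb (Phi r) (\<lambda>(W, Q). mb (qsh p Q) (\<lambda>Q'. mb (dec W) (\<lambda>(W1, W2). F (weight p # W1) W2 Q')))) pr
       = (\<lambda>(p, r). mb (dec r) (\<lambda>(g', r'). mb (Phi g') (\<lambda>(W1, Q1). mb (Phi r') (\<lambda>(W2, Q2).
           mb (qsh Q1 Q2) (\<lambda>Q. mb (qsh p Q) (F (weight p # W1) W2)))))) pr" unfolding e by simp
    qed
    have C: "mb (decp v) (\<lambda>(g, r). mb (Phi g) (\<lambda>(W1, Q1). mb (Phi r) (\<lambda>(W2, Q2). mb (qsh Q1 Q2) (F W1 W2))))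
      = mb (decp v) (\<lambda>(g, r'). mb (decp g) (\<lambda>(p, g'). mb (Phi g') (\<lambda>(W1, Q1). mb (Phi r') (\<lambda>(W2, Q2).
           mb (qsh Q1 Q2) (\<lambda>Q. mb (qsh p Q) (F (weight p # W1) W2))))))"
    proof (rule mb_cong)
      fix gr assume gr: "gr \<in># decp v"
      obtain g r where e: "gr = (g, r)" by force
      have g: "g \<noteq> []" using gr decp_mem unfolding e by blast
      have "mb (Phi g) (\<lambda>(W1, Q1). mb (Phi r) (\<lambda>(W2, Q2). mb (qsh Q1 Q2) (F W1 W2)))
        = mb (decp g) (\<lambda>(p, g'). mb (Phi g') (\<lambda>(W1, Q1). mb (qsh p Q1) (\<lambda>Q1'. mb (Phi r) (\<lambda>(W2, Q2).
           mb (qsh Q1' Q2) (F (weight p # W1) W2)))))"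
        by (simp add: Phi_rec[OF g] St_def split_def)
      also have "\<dots> = mb (decp g) (\<lambda>(p, g'). mb (Phi g') (\<lambda>(W1, Q1). mb (Phi r) (\<lambda>(W2, Q2).
           mb (qsh Q1 Q2) (\<lambda>Q. mb (qsh p Q) (F (weight p # W1) W2)))))"
        by (intro mb_cong) (auto simp: split_def mb_swap[of "qsh _ _" "Phi r"] mb_qsh_assoc)
      finally show "(\<lambda>(g, r). mb (Phi g) (\<lambda>(W1, Q1). mb (Phi r) (\<lambda>(W2, Q2). mb (qsh Q1 Q2) (F W1 W2)))) gr
        = (\<lambda>(g, r'). mb (decp g) (\<lambda>(p, g'). mb (Phi g') (\<lambda>(W1, Q1). mb (Phi r') (\<lambda>(W2, Q2).
           mb (qsh Q1 Q2) (\<lambda>Q. mb (qsh p Q) (F (weight p # W1) W2)))))) gr" unfolding e by simp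
    qed
    have "mb (Phi v) (\<lambda>(W, Q). mb (dec W) (\<lambda>(W1, W2). F W1 W2 Q))
       = mb (decp v) (\<lambda>(p, r). mb (Phi r) (\<lambda>(W, Q). mb (qsh p Q) (\<lambda>Q'. F [] (weight p # W) Q')))
       + mb (decp v) (\<lambda>(p, r). mb (Phi r) (\<lambda>(W, Q). mb (qsh p Q) (\<lambda>Q'. mb (dec W) (\<lambda>(W1, W2). F (weight p # W1) W2 Q'))))"
      by (simp add: Phi_rec[OF v] St_def split_def)
    also have "\<dots> = mb (Phi v) (\<lambda>(W, Q). F [] W Q) + mb (decp v) (\<lambda>(g, r). mb (Phi g) (\<lambda>(W1, Q1). mb (Phi r) (\<lambda>(W2, Q2). mb (qsh Q1 Q2) (F W1 W2))))"
      unfolding A B C decp_coassoc ..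
    also have "\<dots> = mb (dec v) (\<lambda>(g, r). mb (Phi g) (\<lambda>(W1, Q1). mb (Phi r) (\<lambda>(W2, Q2). mb (qsh Q1 Q2) (F W1 W2))))"
      by (simp add: dec_decp[of v] qsh_Nil1_fun split_def del: dec.simps)
    finally show ?thesis .
  qed
qed



definition G1 :: "'w::ab_semigroup_add list \<Rightarrow> ('w list \<times> 'w list \<times> 'w list) multiset" where
  "G1 v = mb (Phi v) (\<lambda>(W, Q). mb (Phi Q) (\<lambda>(A, B). {#(W, A, B)#}))"
definition G2 :: "'w::ab_semigroup_add list \<Rightarrow> ('w list \<times> 'w list \<times> 'w list) multiset" where
  "G2 v = mb (Phi v) (\<lambda>(W, Q). mb (Phi W) (\<lambda>(A, B). {#(A, B, Q)#}))"

definition EE :: "('w::ab_semigroup_add list \<Rightarrow> ('w list \<times> 'w list \<times> 'w list) multiset) \<Rightarrow> 'w list \<Rightarrow> ('w list \<times> 'w list \<times> 'w list) multiset" where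
  "EE G v = mb (decp v) (\<lambda>(p, r). mb (Phi p) (\<lambda>(A1, B1). mb (G r) (\<lambda>(W, A2, B2).
      mb (qsh A1 A2) (\<lambda>A. mb (qsh B1 B2) (\<lambda>B. {#(weight p # W, A, B)#})))))"

lemma Phi_mult_mb: "mb (qsh p Q) (\<lambda>Q'. mb (Phi Q') g) = mb (qP (Phi p) (Phi Q)) g"
  by (simp add: Phi_mult[symmetric])

lemma mb_qP: "mb (qP X Y) g = mb X (\<lambda>(A1, B1). mb Y (\<lambda>(A2, B2). mb (qsh A1 A2) (\<lambda>A. mb (qsh B1 B2) (\<lambda>B. g (A, B)))))"
  by (simp add: qP_def mb_tp split_def)

lemma Phi_mult_image: "mb (qsh p Q) (\<lambda>Q'. image_mset g (Phi Q')) = image_mset g (qP (Phi p) (Phi Q))"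
  by (simp add: Phi_mult[symmetric])

lemma image_qP: "image_mset g (qP X Y) = mb X (\<lambda>(A1, B1). mb Y (\<lambda>(A2, B2). mb (qsh A1 A2) (\<lambda>A. image_mset (\<lambda>B. g (A, B)) (qsh B1 B2))))"
  by (simp add: qP_def tp_def split_def)

lemma G1_rec: "v \<noteq> [] \<Longrightarrow> G1 v = EE G1 v"
proof -
  assume v: "v \<noteq> []"
  have "G1 v = mb (decp v) (\<lambda>(p, r). mb (Phi r) (\<lambda>(W, Q). mb (Phi p) (\<lambda>(A1, B1). mb (Phi Q) (\<lambda>(A2, B2).
      mb (qsh A1 A2) (\<lambda>A. mb (qsh B1 B2) (\<lambda>B. {#(weight p # W, A, B)#}))))))"
    unfolding G1_def Phi_rec[OF v] by (simp add: St_def split_def Phi_mult_mb mb_qP Phi_mult_image image_qP)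
  also have "\<dots> = EE G1 v"
    unfolding EE_def G1_def
    by (rule mb_cong) (auto simp: split_def intro: mb_swap)
  finally show ?thesis .
qed



lemma in_mb: "x \<in># mb X f \<Longrightarrow> \<exists>y. y \<in># X \<and> x \<in># f y"
  by (induction X) auto

lemma Phi_fst: "(W, Q) \<in># Phi v \<Longrightarrow> v \<noteq> [] \<Longrightarrow> W \<noteq> [] \<and> weight W = weight v"
proof (induction "length v" arbitrary: v W Q rule: less_induct)
  case less
  from less(2) have "(W, Q) \<in># mb (decp v) (\<lambda>(p, r). St p (Phi r))" using Phi_rec less(3) by metis
  then obtain p r where pr: "(p, r) \<in># decp v" and m: "(W, Q) \<in># St p (Phi r)"
    by (auto dest!: in_mb)
  from m obtain W' Q' where m2: "(W', Q') \<in># Phi r" and W: "W = weight p # W'"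
    unfolding St_def by (auto dest!: in_mb)
  have p: "p \<noteq> []" "p @ r = v" using pr decp_mem by blast+
  show ?case
  proof (cases "r = []")
    case True
    then have "W' = []" using m2 by simp
    then show ?thesis using W p True by simp
  next
    case False
    have "length r < length v" using p by (cases p) auto
    then have "W' \<noteq> [] \<and> weight W' = weight r" using less(1) m2 False by blast
    then show ?thesis using W p(1) p(2)[symmetric] False by (simp add: weight_Cons weight_append)
  qed
qed

lemma mb_image_swap: "mb X (\<lambda>x. image_mset (\<lambda>y. f x y) Y) = mb Y (\<lambda>y. image_mset (\<lambda>x. f x y) X)"
  using mb_swap[of X Y "\<lambda>x y. {#f x y#}"] by simp

lemma G2_rec:
  fixes v :: "'w::ab_semigroup_add list"
  assumes v: "v \<noteq> []" shows "G2 v = EE G2 v"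
proof -
  define F :: "'w list \<Rightarrow> 'w list \<Rightarrow> 'w list \<Rightarrow> ('w list \<times> 'w list \<times> 'w list) multiset" where "F = (\<lambda>W1 W2 Q. if W1 = [] then {#} else
     mb (Phi W2) (\<lambda>(A2, B2). mb (qsh W1 B2) (\<lambda>B. {#(weight W1 # A2, B, Q)#})))"
  have F0[simp]: "F [] W2 Q = {#}" for W2 Q by (simp add: F_def)
  have "G2 v = mb (Phi v) (\<lambda>(W, Q). mb (dec W) (\<lambda>(W1, W2). F W1 W2 Q))"
    unfolding G2_def
  proof (rule mb_cong)
    fix x assume x: "x \<in># Phi v"
    obtain W Q where e: "x = (W, Q)" by force
    have W: "W \<noteq> []" using Phi_fst x v unfolding e by blast
    have "mb (dec W) (\<lambda>(W1, W2). F W1 W2 Q) = mb (decp W) (\<lambda>(W1, W2). F W1 W2 Q)"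
      by (simp add: dec_decp[of W] del: dec.simps)
    also have "\<dots> = mb (Phi W) (\<lambda>(A, B). {#(A, B, Q)#})"
      unfolding Phi_rec[OF W] St_def
      by (simp add: split_def) (rule mb_cong, auto simp: F_def split_def dest!: decp_mem)
    finally show "(\<lambda>(W, Q). mb (Phi W) (\<lambda>(A, B). {#(A, B, Q)#})) x = (\<lambda>(W, Q). mb (dec W) (\<lambda>(W1, W2). F W1 W2 Q)) x"
      unfolding e by simp
  qed
  also have "\<dots> = mb (dec v) (\<lambda>(g, r). mb (Phi g) (\<lambda>(W1, Q1). mb (Phi r) (\<lambda>(W2, Q2). mb (qsh Q1 Q2) (F W1 W2))))"
    by (rule PhiD)
  also have "\<dots> = mb (decp v) (\<lambda>(g, r). mb (Phi g) (\<lambda>(W1, Q1). mb (Phi r) (\<lambda>(W2, Q2). mb (qsh Q1 Q2) (F W1 W2))))"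
    by (simp add: dec_decp[of v] split_def del: dec.simps)
  also have "\<dots> = EE G2 v"
    unfolding EE_def
  proof (rule mb_cong)
    fix gr assume gr: "gr \<in># decp v"
    obtain g r where e: "gr = (g, r)" by force
    have g: "g \<noteq> []" using gr decp_mem unfolding e by blast
    have "mb (Phi g) (\<lambda>(W1, Q1). mb (Phi r) (\<lambda>(W2, Q2). mb (qsh Q1 Q2) (F W1 W2)))
       = mb (Phi g) (\<lambda>(A1, B1). mb (G2 r) (\<lambda>(W, A2, B2). mb (qsh A1 A2) (\<lambda>A. mb (qsh B1 B2) (\<lambda>B. {#(weight g # W, A, B)#}))))"
    proof (rule mb_cong)
      fix y assume y: "y \<in># Phi g"
      obtain W1 Q1 where e2: "y = (W1, Q1)" by force
      have W1: "W1 \<noteq> []" "weight W1 = weight g" using Phi_fst y g unfolding e2 by blast+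
      show "(\<lambda>(W1, Q1). mb (Phi r) (\<lambda>(W2, Q2). mb (qsh Q1 Q2) (F W1 W2))) y =
         (\<lambda>(A1, B1). mb (G2 r) (\<lambda>(W, A2, B2). mb (qsh A1 A2) (\<lambda>A. mb (qsh B1 B2) (\<lambda>B. {#(weight g # W, A, B)#})))) y"
        unfolding e2 G2_def using W1
        apply (simp add: F_def split_def mb_swap[of "qsh Q1 _"])
        apply (intro mb_cong)
        apply (rule mb_image_swap)
        done
    qed
    then show "(\<lambda>(g, r). mb (Phi g) (\<lambda>(W1, Q1). mb (Phi r) (\<lambda>(W2, Q2). mb (qsh Q1 Q2) (F W1 W2)))) gr =
         (\<lambda>(p, r). mb (Phi p) (\<lambda>(A1, B1). mb (G2 r) (\<lambda>(W, A2, B2). mb (qsh A1 A2) (\<lambda>A. mb (qsh B1 B2) (\<lambda>B. {#(weight p # W, A, B)#}))))) gr"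
      unfolding e by simp
  qed
  finally show ?thesis .
qed



lemma G1_G2: "G1 v = G2 v"
proof (induction "length v" arbitrary: v rule: less_induct)
  case less
  show ?case
  proof (cases "v = []")
    case True then show ?thesis by (simp add: G1_def G2_def)
  next
    case False
    have "EE G1 v = EE G2 v"
      unfolding EE_def
    proof (rule mb_cong)
      fix pr assume pr: "pr \<in># decp v"
      obtain p r where e: "pr = (p, r)" by force
      have "p \<noteq> []" "p @ r = v" using pr decp_mem unfolding e by blast+
      then have "length r < length v" by (cases p) auto
      then have "G1 r = G2 r" using less by blast
      then show "(\<lambda>(p, r). mb (Phi p) (\<lambda>(A1, B1). mb (G1 r) (\<lambda>(W, A2, B2).
      mb (qsh A1 A2) (\<lambda>A. mb (qsh B1 B2) (\<lambda>B. {#(weight p # W, A, B)#}))))) pr =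
        (\<lambda>(p, r). mb (Phi p) (\<lambda>(A1, B1). mb (G2 r) (\<lambda>(W, A2, B2).
      mb (qsh A1 A2) (\<lambda>A. mb (qsh B1 B2) (\<lambda>B. {#(weight p # W, A, B)#}))))) pr"
        unfolding e by simp
    qed
    then show ?thesis using G1_rec G2_rec False by metis
  qed
qed

lemma es_sum: "es F (\<Sum>i\<in>I. f i) = (\<Sum>i\<in>I. es F (f i))"
  by (induction I rule: infinite_finite_induct) auto
lemma es_mult_left: "c * es F X = es (\<lambda>x. c * F x) X"
  by (induction X) (auto simp: algebra_simps)
lemma es_mult_right: "es F X * c = es (\<lambda>x. F x * c) X"
  by (induction X) (auto simp: algebra_simps)

lemma diamond_Phi: "diamond M N w = es (\<lambda>(W, Q). M W * N Q) (Phi w)"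
proof (cases "w = []")
  case True then show ?thesis by (simp add: diamond_def)
next
  case False
  then show ?thesis
    by (simp add: diamond_def Phi_def es_sum ev_es es_mult_left)
qed

lemma diamond_Phi_fun: "diamond M N = (\<lambda>w. es (\<lambda>(W, Q). M W * N Q) (Phi w))"
  by (rule ext) (rule diamond_Phi)

lemma ev_qshs: "symmetrel N \<Longrightarrow> ev N (qshs ws) = prod_list (map N ws)"
proof (induction ws)
  case Nil then show ?case by (simp add: symmetrel_def ev_es)
next
  case (Cons w ws)
  have "ev N (qshs (w # ws)) = es (\<lambda>x. ev N (qsh w x)) (qshs ws)"
    by (simp add: ev_es mb_def[symmetric])
  also have "\<dots> = es (\<lambda>x. N w * N x) (qshs ws)"
    using Cons.prems by (simp add: symmetrel_def)
  also have "\<dots> = N w * ev N (qshs ws)" by (simp add: es_mult_left ev_es)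
  finally show ?case using Cons by simp
qed

lemma part2: "symmetrel N \<Longrightarrow> diamond M N = mcomp M N"
  by (rule ext) (auto simp: diamond_def mcomp_def ev_qshs symmetrel_def)

lemma es_tp: "es (\<lambda>(x, y). F x * G y) (tp X Y) = es F X * es G Y"
  by (simp add: tp_def es_mult_right, simp add: es_mult_left)

lemma es_tp2: "es (\<lambda>p. F (fst p) * G (snd p)) (tp X Y) = es F X * es G Y"
  using es_tp[of F G X Y] by (simp add: split_def)

lemma es_qP: assumes "symmetrel M" "symmetrel N"
  shows "es (\<lambda>(W, Q). M W * N Q) (qP A B) = es (\<lambda>(W, Q). M W * N Q) A * es (\<lambda>(W, Q). M W * N Q) B"
proof -
  have "es (\<lambda>(W, Q). M W * N Q) (qP A B) = es (\<lambda>(a, b). es (\<lambda>(c, d). (M a * M c) * (N b * N d)) B) A"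
    using assms by (simp add: qP_def es_tp2 split_def symmetrel_def ev_es)
  also have "\<dots> = es (\<lambda>(W, Q). M W * N Q) A * es (\<lambda>(W, Q). M W * N Q) B"
    by (simp add: es_mult_right split_def, simp add: es_mult_left mult_ac)
  finally show ?thesis .
qed

lemma part3: assumes "symmetrel M" "symmetrel N" shows "symmetrel (mcomp M N)"
proof -
  have D: "mcomp M N = diamond M N" using part2 assms(2) by metis
  have "ev (diamond M N) (qsh u v) = diamond M N u * diamond M N v" for u v
  proof -
    have "ev (diamond M N) (qsh u v) = es (\<lambda>(W, Q). M W * N Q) (mb (qsh u v) Phi)"
      by (simp add: ev_es diamond_Phi_fun)
    also have "\<dots> = diamond M N u * diamond M N v"
      by (simp add: Phi_mult es_qP assms diamond_Phi)
    finally show ?thesis .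
  qed
  moreover have "mcomp M N [] = 1" using assms(1) by (simp add: mcomp_def symmetrel_def)
  ultimately show ?thesis unfolding symmetrel_def D by (simp add: D[symmetric])
qed

lemma part1: "diamond (diamond M N) P = diamond M (diamond N P)"
proof
  fix w
  have "diamond (diamond M N) P w = es (\<lambda>(A, B, C). M A * N B * P C) (G2 w)"
    by (simp add: diamond_Phi G2_def split_def es_mult_right)
  also have "\<dots> = es (\<lambda>(A, B, C). M A * N B * P C) (G1 w)" by (simp add: G1_G2)
  also have "\<dots> = diamond M (diamond N P) w"
    by (simp add: diamond_Phi G1_def split_def es_mult_left mult.assoc)
  finally show "diamond (diamond M N) P w = diamond M (diamond N P) w" .
qed

theorem mainTheorem4:
  shows "(\<forall>M N P :: 'w::ab_semigroup_add list \<Rightarrow> 'a::comm_ring_1. diamond (diamond M N) P = diamond M (diamond N P))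
    \<and> (\<forall>M N :: 'w list \<Rightarrow> 'a. symmetrel N \<longrightarrow> diamond M N = mcomp M N)
    \<and> (\<forall>M N :: 'w list \<Rightarrow> 'a. symmetrel M \<and> symmetrel N \<longrightarrow> symmetrel (mcomp M N))"
  using part1 part2 part3 by blast

end
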